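(* In every orthomodular lattice, for all elements $a,b,c,d$ the following hold: (1) $(a\to_1 b)\cap(b\to_2 c)\cap(c\to_1 d)\cap(d\to_2 a) = (a\equiv b)\cap(b\equiv c)\cap(c\equiv d)$; (2) $(a\to_5 b)\cap(b\to_5 c)\cap(c\to_5 d)\cap(d\to_5 a) = (a\equiv b)\cap(b\equiv c)\cap(c\equiv d)$; (3) $(a\to_1 b)\cap(b\to_2 c)\cap(c\to_1 a)\le a\equiv c$; (4) $(a\equiv b)\cap((b\equiv c)\cup(a\equiv c)) = ((a\equiv b)\cap(b\equiv c))\cup((a\equiv b)\cap(a\equiv c))$; (5) $(a\equiv b)\cap((b\equiv c)\cup(a\equiv c))\le a\equiv c$; (6) $(a\equiv b)\to_0((a\equiv c)\equiv(b\equiv c)) = 1$.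
   Context: An orthomodular lattice is an ortholattice $(L,\cap,\cup,{}',0,1)$ satisfying $a\le b\Rightarrow b=a\cup(a'\cap b)$. Notation: $a\equiv b=(a\cap b)\cup(a'\cap b')$; $a\to_0 b=a'\cup b$; $a\to_1 b=a'\cup(a\cap b)$; $a\to_2 b=b\cup(a'\cap b')$; $a\to_5 b=(a\cap b)\cup(a'\cap b)\cup(a'\cap b')$. *)

theory Defs
  imports Main
begin

class ortholattice = bounded_lattice + uminus +
  assumes compl_inf_bot: "inf x (- x) = bot"
      and compl_sup_top: "sup x (- x) = top"
      and compl_involution: "- (- x) = x"
      and compl_antimono: "x \<le> y \<Longrightarrow> - y \<le> - x"

class orthomodular_lattice = ortholattice +
  assumes orthomodular: "a \<le> b \<Longrightarrow> b = sup a (inf (- a) b)"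

context ortholattice
begin

definition biimp :: "'a \<Rightarrow> 'a \<Rightarrow> 'a" where
  "biimp a b = sup (inf a b) (inf (- a) (- b))"

definition imp0 :: "'a \<Rightarrow> 'a \<Rightarrow> 'a" where
  "imp0 a b = sup (- a) b"

definition imp1 :: "'a \<Rightarrow> 'a \<Rightarrow> 'a" where
  "imp1 a b = sup (- a) (inf a b)"

definition imp2 :: "'a \<Rightarrow> 'a \<Rightarrow> 'a" where
  "imp2 a b = sup b (inf (- a) (- b))"

definition imp5 :: "'a \<Rightarrow> 'a \<Rightarrow> 'a" where
  "imp5 a b = sup (sup (inf a b) (inf (- a) b)) (inf (- a) (- b))"

end

end

theory Submission
  imports Defs
begin

context ortholattice
begin

lemma ol_compl_le_iff: "- x \<le> - y \<longleftrightarrow> y \<le> x"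
  by (metis compl_antimono compl_involution)

lemma ol_le_compl_swap: "x \<le> - y \<Longrightarrow> y \<le> - x"
  by (metis compl_antimono compl_involution)

lemma ol_demorgan_sup: "- (sup x y) = inf (- x) (- y)"
proof (rule order.antisym)
  show "- sup x y \<le> inf (- x) (- y)"
    by (simp add: compl_antimono)
  have "x \<le> - inf (- x) (- y)" and "y \<le> - inf (- x) (- y)"
    by (metis compl_antimono compl_involution inf_le1,
        metis compl_antimono compl_involution inf_le2)
  then have "sup x y \<le> - inf (- x) (- y)" by simp
  then show "inf (- x) (- y) \<le> - sup x y"
    by (metis compl_antimono compl_involution)
qed

lemma ol_demorgan_inf: "- (inf x y) = sup (- x) (- y)"
  by (metis ol_demorgan_sup compl_involution)

end

context orthomodular_lattice
begin

lemma om_dual: "a \<le> b \<Longrightarrow> a = inf b (sup (- b) a)"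
proof -
  assume "a \<le> b"
  then have "- b \<le> - a" by (rule compl_antimono)
  then have "- a = sup (- b) (inf (- (- b)) (- a))" by (rule orthomodular)
  then have "- (- a) = - sup (- b) (inf b (- a))" by (simp add: compl_involution)
  then show ?thesis by (simp add: compl_involution ol_demorgan_sup ol_demorgan_inf)
qed

lemma tlem:
  assumes "U \<le> S" "V \<le> - S"
  shows "inf (sup U V) S = U"
proof -
  let ?t = "inf (sup U V) S"
  have U1: "U \<le> ?t" using assms by simp
  have t: "?t = sup U (inf (- U) ?t)" using orthomodular[OF U1] .
  have "- S \<le> - U" using assms(1) compl_antimono by blast
  then have VU: "V \<le> - U" using assms(2) by (rule order.trans[rotated])
  have "V = inf (- U) (sup (- (- U)) V)" using om_dual[OF VU] .
  then have V2: "V = inf (- U) (sup U V)" by (simp add: compl_involution)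
  have "inf (- U) ?t = inf S V"
    by (metis V2 inf.assoc inf.commute)
  also have "\<dots> \<le> inf S (- S)" using assms(2) by (simp add: le_infI2)
  also have "\<dots> = bot" by (rule compl_inf_bot)
  finally have "inf (- U) ?t = bot" by (simp add: bot_unique)
  with t show ?thesis by simp
qed

lemma cyc:
  assumes uv: "U \<le> - V" and vw: "V \<le> - W" and wx: "W \<le> - X" and xu: "X \<le> - U"
  shows "inf (sup U V) (sup W X) = sup (inf U W) (inf V X)"
proof (rule order.antisym)
  define S where "S = sup U W"
  have US: "U \<le> S" and WS: "W \<le> S" unfolding S_def by simp_all
  have VS: "V \<le> - S" unfolding S_def ol_demorgan_sup
    using uv vw ol_le_compl_swap by simp
  have XS: "X \<le> - S" unfolding S_def ol_demorgan_sup
    using wx xu ol_le_compl_swap by simp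
  have AS: "inf (sup U V) S = U" using tlem[OF US VS] .
  have BS: "inf (sup W X) S = W" using tlem[OF WS XS] .
  have AS': "inf (sup U V) (- S) = V"
    using tlem[of V "- S" U] VS US by (simp add: compl_involution sup.commute)
  have BS': "inf (sup W X) (- S) = X"
    using tlem[of X "- S" W] XS WS by (simp add: compl_involution sup.commute)
  define T where "T = inf (sup U V) (sup W X)"
  define k where "k = inf T S"
  have kUW: "k \<le> inf U W"
  proof -
    have "k \<le> inf (sup U V) S" unfolding k_def T_def by (simp add: le_infI1)
    moreover have "k \<le> inf (sup W X) S" unfolding k_def T_def
      by (rule inf_mono) simp_all
    ultimately show ?thesis using AS BS by simp
  qed
  have TVX: "inf T (- S) \<le> inf V X"
  proof -
    have "inf T (- S) \<le> inf (sup U V) (- S)" unfolding T_def by (simp add: le_infI1)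
    moreover have "inf T (- S) \<le> inf (sup W X) (- S)" unfolding T_def
      by (rule inf_mono) simp_all
    ultimately show ?thesis using AS' BS' by simp
  qed
  have UWT: "inf U W \<le> T" unfolding T_def
    by (simp add: le_infI1 le_infI2 le_supI1)
  define h where "h = inf (sup T (- S)) S"
  have h1: "sup T (- S) \<le> sup U (- S)"
  proof -
    have "T \<le> sup U V" unfolding T_def by simp
    also have "\<dots> \<le> sup U (- S)" using VS by (simp add: le_supI2)
    finally show ?thesis by simp
  qed
  have h2: "sup T (- S) \<le> sup W (- S)"
  proof -
    have "T \<le> sup W X" unfolding T_def by simp
    also have "\<dots> \<le> sup W (- S)" using XS by (simp add: le_supI2)
    finally show ?thesis by simp
  qed
  have hU: "h \<le> U"
  proof -
    have "h \<le> inf (sup U (- S)) S" unfolding h_def using h1 by (simp add: le_infI1)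
    also have "\<dots> = U" using tlem[of U S "- S"] US by simp
    finally show ?thesis .
  qed
  have hW: "h \<le> W"
  proof -
    have "h \<le> inf (sup W (- S)) S" unfolding h_def using h2 by (simp add: le_infI1)
    also have "\<dots> = W" using tlem[of W S "- S"] WS by simp
    finally show ?thesis .
  qed
  have hk: "h \<le> k"
  proof -
    have "h \<le> T" using hU hW UWT by (meson le_inf_iff order.trans)
    moreover have "h \<le> S" unfolding h_def by simp
    ultimately show ?thesis unfolding k_def by simp
  qed
  have e1: "sup T (- S) = sup (- S) (inf (- (- S)) (sup T (- S)))"
    by (rule orthomodular) simp
  have "sup T (- S) = sup (- S) h"
    using e1 unfolding h_def by (simp add: compl_involution inf.commute)
  then have "sup T (- S) \<le> sup (- S) k" using hk by (metis sup_mono order.refl)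
  then have Tle: "T \<le> sup k (- S)" by (simp add: sup.commute)
  have kT: "k \<le> T" unfolding k_def by simp
  have kS: "k \<le> S" unfolding k_def by simp
  have T2: "T = sup k (inf (- k) T)" by (rule orthomodular[OF kT])
  have "- S \<le> - k" using kS compl_antimono by blast
  then have "- S = inf (- k) (sup (- (- k)) (- S))" by (rule om_dual)
  then have SS: "- S = inf (- k) (sup k (- S))" by (simp add: compl_involution)
  have "inf (- k) T \<le> inf (- k) (sup k (- S))" using Tle by (simp add: le_infI2)
  then have "inf (- k) T \<le> - S" using SS by simp
  then have "inf (- k) T \<le> inf T (- S)" by simp
  then have "inf (- k) T \<le> inf V X" using TVX by (rule order.trans)
  then have "T \<le> sup (inf U W) (inf V X)" using T2 kUW
    by (metis sup_mono)
  then show "inf (sup U V) (sup W X) \<le> sup (inf U W) (inf V X)" unfolding T_def .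
next
  show "sup (inf U W) (inf V X) \<le> inf (sup U V) (sup W X)"
    by (simp add: le_infI1 le_infI2 le_supI1 le_supI2)
qed


lemmas dm = ol_demorgan_inf ol_demorgan_sup compl_involution

lemma L1:
  "inf (inf (inf (imp1 a b) (imp2 b c)) (imp1 c d)) (imp2 d a)
   = sup (inf (inf a b) (inf c d)) (inf (inf (- a) (- d)) (inf (- b) (- c)))"
proof -
  have P: "inf (imp1 a b) (imp2 d a) = sup (inf a b) (inf (- a) (- d))"
  proof -
    have "inf (sup (inf a b) (- a)) (sup a (inf (- d) (- a)))
        = sup (inf (inf a b) a) (inf (- a) (inf (- d) (- a)))"
      by (rule cyc) (auto simp: dm intro: le_supI1 le_supI2 le_infI1 le_infI2)
    then show ?thesis unfolding imp1_def imp2_def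
      by (simp add: sup.commute inf_aci)
  qed
  have Q: "inf (imp2 b c) (imp1 c d) = sup (inf c d) (inf (- b) (- c))"
  proof -
    have "inf (sup c (inf (- b) (- c))) (sup (inf c d) (- c))
        = sup (inf c (inf c d)) (inf (inf (- b) (- c)) (- c))"
      by (rule cyc) (auto simp: dm intro: le_supI1 le_supI2 le_infI1 le_infI2)
    then show ?thesis unfolding imp1_def imp2_def
      by (simp add: sup.commute inf_aci)
  qed
  have "inf (inf (inf (imp1 a b) (imp2 b c)) (imp1 c d)) (imp2 d a)
      = inf (inf (imp1 a b) (imp2 d a)) (inf (imp2 b c) (imp1 c d))"
    by (simp add: inf_aci)
  also have "\<dots> = inf (sup (inf a b) (inf (- a) (- d))) (sup (inf c d) (inf (- b) (- c)))"
    using P Q by simp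
  also have "\<dots> = sup (inf (inf a b) (inf c d)) (inf (inf (- a) (- d)) (inf (- b) (- c)))"
    by (rule cyc) (auto simp: dm intro: le_supI1 le_supI2 le_infI1 le_infI2)
  finally show ?thesis .
qed

lemma R1:
  "inf (inf (biimp a b) (biimp b c)) (biimp c d)
   = sup (inf (inf a b) (inf c d)) (inf (inf (- a) (- d)) (inf (- b) (- c)))"
proof -
  have "inf (biimp a b) (biimp b c) = sup (inf (inf a b) (inf b c)) (inf (inf (- a) (- b)) (inf (- b) (- c)))"
    unfolding biimp_def
    by (rule cyc) (auto simp: dm intro: le_supI1 le_supI2 le_infI1 le_infI2)
  also have "\<dots> = sup (inf (inf a b) c) (inf (inf (- a) (- b)) (- c))"
    by (simp add: inf_aci)
  finally have E: "inf (biimp a b) (biimp b c) = sup (inf (inf a b) c) (inf (inf (- a) (- b)) (- c))" .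
  have "inf (sup (inf (inf a b) c) (inf (inf (- a) (- b)) (- c))) (sup (inf c d) (inf (- c) (- d)))
      = sup (inf (inf (inf a b) c) (inf c d)) (inf (inf (inf (- a) (- b)) (- c)) (inf (- c) (- d)))"
    by (rule cyc) (auto simp: dm intro: le_supI1 le_supI2 le_infI1 le_infI2)
  then show ?thesis using E unfolding biimp_def[of c d]
    by (simp add: inf_aci)
qed

lemma YN:
  "inf (biimp a b) (sup (biimp b c) (biimp a c))
   \<le> sup (inf (inf a b) c) (inf (inf (- a) (- b)) (- c))"
proof -
  have Z: "sup (biimp b c) (biimp a c)
      = sup (sup (inf b c) (inf a c)) (sup (inf (- b) (- c)) (inf (- a) (- c)))"
    unfolding biimp_def by (simp add: sup_aci)
  have "inf (sup (inf a b) (inf (- a) (- b))) (sup (sup (inf b c) (inf a c)) (sup (inf (- b) (- c)) (inf (- a) (- c))))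
     = sup (inf (inf a b) (sup (inf b c) (inf a c))) (inf (inf (- a) (- b)) (sup (inf (- b) (- c)) (inf (- a) (- c))))"
    by (rule cyc) (auto simp: dm intro: le_supI1 le_supI2 le_infI1 le_infI2)
  moreover have "inf (inf a b) (sup (inf b c) (inf a c)) \<le> inf (inf a b) c"
    by (auto intro: le_infI1 le_infI2)
  moreover have "inf (inf (- a) (- b)) (sup (inf (- b) (- c)) (inf (- a) (- c))) \<le> inf (inf (- a) (- b)) (- c)"
    by (auto intro: le_infI1 le_infI2)
  ultimately show ?thesis using Z unfolding biimp_def[of a b]
    by (metis sup_mono)
qed

end


theorem theorem4:
  fixes a b c d :: "'a::orthomodular_lattice"
  shows "(inf (inf (inf (imp1 a b) (imp2 b c)) (imp1 c d)) (imp2 d a)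
           = inf (inf (biimp a b) (biimp b c)) (biimp c d)) \<and>
         (inf (inf (inf (imp5 a b) (imp5 b c)) (imp5 c d)) (imp5 d a)
           = inf (inf (biimp a b) (biimp b c)) (biimp c d)) \<and>
         (inf (inf (imp1 a b) (imp2 b c)) (imp1 c a) \<le> biimp a c) \<and>
         (inf (biimp a b) (sup (biimp b c) (biimp a c))
           = sup (inf (biimp a b) (biimp b c)) (inf (biimp a b) (biimp a c))) \<and>
         (inf (biimp a b) (sup (biimp b c) (biimp a c)) \<le> biimp a c) \<and>
         (imp0 (biimp a b) (biimp (biimp a c) (biimp b c)) = top)"
proof -
  define N4 where "N4 = sup (inf (inf a b) (inf c d)) (inf (inf (- a) (- d)) (inf (- b) (- c)))"
  have p1: "inf (inf (inf (imp1 a b) (imp2 b c)) (imp1 c d)) (imp2 d a)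
           = inf (inf (biimp a b) (biimp b c)) (biimp c d)"
    by (simp only: L1 R1)
  have p2: "inf (inf (inf (imp5 a b) (imp5 b c)) (imp5 c d)) (imp5 d a)
           = inf (inf (biimp a b) (biimp b c)) (biimp c d)"
  proof (rule order.antisym)
    have i1: "\<And>x y::'a. imp5 x y \<le> imp1 x y"
      unfolding imp5_def imp1_def by (blast intro: le_supI le_infI le_supI1 le_supI2 le_infI1 le_infI2 order.refl)
    have i2: "\<And>x y::'a. imp5 x y \<le> imp2 x y"
      unfolding imp5_def imp2_def by (blast intro: le_supI le_infI le_supI1 le_supI2 le_infI1 le_infI2 order.refl)
    have "inf (inf (inf (imp5 a b) (imp5 b c)) (imp5 c d)) (imp5 d a)
       \<le> inf (inf (inf (imp1 a b) (imp2 b c)) (imp1 c d)) (imp2 d a)"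
      using i1 i2 by (intro inf_mono) auto
    then show "inf (inf (inf (imp5 a b) (imp5 b c)) (imp5 c d)) (imp5 d a)
       \<le> inf (inf (biimp a b) (biimp b c)) (biimp c d)" using p1 by simp
  next
    have k: "\<And>x y::'a. sup (inf x y) (inf (- x) (- y)) \<le> imp5 x y"
      unfolding imp5_def by (auto intro: le_supI1 le_supI2)
    have "N4 \<le> sup (inf a b) (inf (- a) (- b))" unfolding N4_def
      by (blast intro: le_supI le_infI le_supI1 le_supI2 le_infI1 le_infI2 order.refl)
    moreover have "N4 \<le> sup (inf b c) (inf (- b) (- c))" unfolding N4_def
      by (blast intro: le_supI le_infI le_supI1 le_supI2 le_infI1 le_infI2 order.refl)
    moreover have "N4 \<le> sup (inf c d) (inf (- c) (- d))" unfolding N4_def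
      by (blast intro: le_supI le_infI le_supI1 le_supI2 le_infI1 le_infI2 order.refl)
    moreover have "N4 \<le> sup (inf d a) (inf (- d) (- a))" unfolding N4_def
      by (blast intro: le_supI le_infI le_supI1 le_supI2 le_infI1 le_infI2 order.refl)
    ultimately have "N4 \<le> inf (inf (inf (imp5 a b) (imp5 b c)) (imp5 c d)) (imp5 d a)"
      using k by (meson le_inf_iff order.trans)
    then show "inf (inf (biimp a b) (biimp b c)) (biimp c d)
       \<le> inf (inf (inf (imp5 a b) (imp5 b c)) (imp5 c d)) (imp5 d a)"
      unfolding R1 N4_def[symmetric] .
  qed
  have p3: "inf (inf (imp1 a b) (imp2 b c)) (imp1 c a) \<le> biimp a c"
  proof -
    have t: "imp2 a a = top" unfolding imp2_def by (simp add: compl_sup_top)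
    have "inf (inf (imp1 a b) (imp2 b c)) (imp1 c a)
        = sup (inf (inf a b) (inf c a)) (inf (inf (- a) (- a)) (inf (- b) (- c)))"
      using L1[of a b c a] t by simp
    also have "\<dots> \<le> biimp a c" unfolding biimp_def
      by (blast intro: le_supI le_infI le_supI1 le_supI2 le_infI1 le_infI2 order.refl)
    finally show ?thesis .
  qed
  define N where "N = sup (inf (inf a b) c) (inf (inf (- a) (- b)) (- c))"
  have Y: "inf (biimp a b) (sup (biimp b c) (biimp a c)) \<le> N" unfolding N_def by (rule YN)
  have Nab: "N \<le> biimp a b" unfolding N_def biimp_def by (blast intro: le_supI le_infI le_supI1 le_supI2 le_infI1 le_infI2 order.refl)
  have Nbc: "N \<le> biimp b c" unfolding N_def biimp_def by (blast intro: le_supI le_infI le_supI1 le_supI2 le_infI1 le_infI2 order.refl)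
  have Nac: "N \<le> biimp a c"
    unfolding N_def biimp_def by (blast intro: le_supI le_infI le_supI1 le_supI2 le_infI1 le_infI2 order.refl)
  have p4: "inf (biimp a b) (sup (biimp b c) (biimp a c))
           = sup (inf (biimp a b) (biimp b c)) (inf (biimp a b) (biimp a c))"
  proof (rule order.antisym)
    have "N \<le> inf (biimp a b) (biimp b c)" using Nab Nbc by simp
    then show "inf (biimp a b) (sup (biimp b c) (biimp a c))
           \<le> sup (inf (biimp a b) (biimp b c)) (inf (biimp a b) (biimp a c))"
      using Y by (meson le_supI1 order.trans)
  next
    show "sup (inf (biimp a b) (biimp b c)) (inf (biimp a b) (biimp a c))
       \<le> inf (biimp a b) (sup (biimp b c) (biimp a c))"
      by (blast intro: le_supI le_infI le_supI1 le_supI2 le_infI1 le_infI2 order.refl)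
  qed
  have p5: "inf (biimp a b) (sup (biimp b c) (biimp a c)) \<le> biimp a c"
    using Y Nac by (rule order.trans)
  have p6: "imp0 (biimp a b) (biimp (biimp a c) (biimp b c)) = top"
  proof -
    let ?e = "biimp a b" and ?p = "biimp a c" and ?q = "biimp b c"
    have "- imp0 ?e (biimp ?p ?q) = inf (inf ?e (sup (- ?p) (- ?q))) (sup ?p ?q)"
      unfolding imp0_def biimp_def[of ?p ?q] by (simp add: dm inf_aci)
    also have "\<dots> \<le> inf (sup (- ?p) (- ?q)) (inf ?e (sup ?q ?p))"
      by (simp add: inf_aci sup.commute)
    also have "\<dots> \<le> inf (sup (- ?p) (- ?q)) (inf ?p ?q)"
    proof (rule inf_mono[OF order.refl])
      have "inf ?e (sup ?q ?p) \<le> N" using Y .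
      then show "inf ?e (sup ?q ?p) \<le> inf ?p ?q" using Nac Nbc
        by (meson le_inf_iff order.trans)
    qed
    also have "\<dots> = inf (- inf ?p ?q) (inf ?p ?q)" by (simp add: dm)
    also have "\<dots> = bot" by (simp add: inf.commute compl_inf_bot)
    finally have "- imp0 ?e (biimp ?p ?q) = bot" by (simp add: bot_unique)
    then have "- (- imp0 ?e (biimp ?p ?q)) = - bot" by simp
    moreover have "- (bot::'a) = top"
      using compl_sup_top[of "bot::'a"] by simp
    ultimately show ?thesis by (simp add: compl_involution)
  qed
  show ?thesis using p1 p2 p3 p4 p5 p6 by blast
qed

end
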